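(* Let $0<q<1$ and let $A_q(t)=\sum_{n=0}^{\infty}A_{n,q}\dfrac{t^n}{[n]_q!}$ be a power series, analytic at $t=0$, with $A_q(0)=A_{0,q}\neq 0$. Define the $q$-Appell polynomials $A_{n,q}(x)$ by \[ A_q(t)\,e_q(tx)=\sum_{n=0}^{\infty}A_{n,q}(x)\frac{t^n}{[n]_q!}, \] and define the numbers $\alpha_n$ by the expansion \[ t\,\frac{D_{q,t}A_q(t)}{A_q(qt)}=\sum_{n=0}^{\infty}\alpha_n\frac{t^n}{[n]_q!}. \] Then for every integer $n\ge 1$, \begin{align*} A_{n,q}(qx)&=\frac{1}{[n]_q}\sum_{k=0}^{n}\begin{bmatrix}n\\k\end{bmatrix}_q\alpha_{n-k}\,q^{k}A_{k,q}(x)+x\,q^{n}A_{n-1,q}(x)\\ &=\frac{1}{[n]_q}\alpha_0 q^{n}A_{n,q}(x)+q^{n}\left(x+\alpha_1q^{-1}\right)A_{n-1,q}(x)+\frac{1}{[n]_q}\sum_{k=0}^{n-2}\begin{bmatrix}n\\k\end{bmatrix}_q\alpha_{n-k}\,q^{k}A_{k,q}(x). \end{align*}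
   Context: $[n]_q=\frac{1-q^n}{1-q}$, $[0]_q!=1$, $[n]_q!=[n]_q[n-1]_q\cdots[1]_q$, and $\begin{bmatrix}n\\k\end{bmatrix}_q=\frac{[n]_q!}{[k]_q![n-k]_q!}$. The $q$-exponential is $e_q(t)=\sum_{n=0}^\infty \frac{t^n}{[n]_q!}$. The $q$-derivative is $D_{q,x}f(x)=\frac{f(qx)-f(x)}{(q-1)x}$ (for $x\neq0$; for power series/polynomials it acts by $D_{q,x}x^n=[n]_qx^{n-1}$), and $D_{q,t}$ is the same operator in the variable $t$. *)

theory Defs
  imports "HOL-Analysis.Analysis" "HOL-Computational_Algebra.Formal_Power_Series"
begin

definition qint :: "real \<Rightarrow> nat \<Rightarrow> real" where
  "qint q n = (1 - q ^ n) / (1 - q)"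

definition qfact :: "real \<Rightarrow> nat \<Rightarrow> real" where
  "qfact q n = (\<Prod>i=1..n. qint q i)"

definition qbinom :: "real \<Rightarrow> nat \<Rightarrow> nat \<Rightarrow> real" where
  "qbinom q n k = qfact q n / (qfact q k * qfact q (n - k))"

definition fps_qderiv :: "real \<Rightarrow> real fps \<Rightarrow> real fps" where
  "fps_qderiv q f = Abs_fps (\<lambda>n. qint q (Suc n) * fps_nth f (Suc n))"

definition fps_qscale :: "real \<Rightarrow> real fps \<Rightarrow> real fps" where
  "fps_qscale q f = Abs_fps (\<lambda>n. q ^ n * fps_nth f n)"

definition qAseries :: "real \<Rightarrow> (nat \<Rightarrow> real) \<Rightarrow> real fps" where
  "qAseries q a = Abs_fps (\<lambda>n. a n / qfact q n)"

definition qexp_fps :: "real \<Rightarrow> real \<Rightarrow> real fps" where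
  "qexp_fps q x = Abs_fps (\<lambda>n. x ^ n / qfact q n)"

definition qAppell :: "real \<Rightarrow> (nat \<Rightarrow> real) \<Rightarrow> nat \<Rightarrow> real \<Rightarrow> real" where
  "qAppell q a n x = qfact q n * fps_nth (qAseries q a * qexp_fps q x) n"

definition qalpha :: "real \<Rightarrow> (nat \<Rightarrow> real) \<Rightarrow> nat \<Rightarrow> real" where
  "qalpha q a n = qfact q n *
     fps_nth (fps_X * fps_qderiv q (qAseries q a) / fps_qscale q (qAseries q a)) n"

end

theory Submission
  imports Defs
begin

definition qtheta :: "real \<Rightarrow> real fps \<Rightarrow> real fps" where
  "qtheta q f = Abs_fps (\<lambda>n. qint q n * fps_nth f n)"

lemma qint_add: assumes "q \<noteq> 1" "i \<le> n"
  shows "qint q n = qint q i + q^i * qint q (n-i)"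
proof -
  have "q^n = q^i * q^(n-i)" using assms(2) by (simp flip: power_add)
  moreover have "1 - q \<noteq> 0" using assms by simp
  ultimately show ?thesis unfolding qint_def by (simp add: field_simps)
qed

lemma qint_0[simp]: "qint q 0 = 0" by (simp add: qint_def)

lemma qfact_Suc: "qfact q (Suc m) = qfact q m * qint q (Suc m)"
  by (simp add: qfact_def)

lemma qint_pos: assumes "0 < q" "q < 1" "1 \<le> n" shows "qint q n > 0"
proof -
  have "q^n < 1" using assms power_strict_decreasing[of 0 n q] by (simp add: power_less_one_iff)
  then show ?thesis using assms by (simp add: qint_def)
qed

lemma qfact_pos: assumes "0 < q" "q < 1" shows "qfact q n > 0"
  unfolding qfact_def using qint_pos[OF assms] by (intro prod_pos) auto

lemma theta_mult: assumes "q \<noteq> 1"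
  shows "qtheta q (f*g) = qtheta q f * g + fps_qscale q f * qtheta q g"
proof (rule fps_ext)
  fix n
  have "fps_nth (qtheta q (f*g)) n = (\<Sum>i=0..n. qint q n * (fps_nth f i * fps_nth g (n-i)))"
    by (simp add: qtheta_def fps_mult_nth sum_distrib_left)
  also have "\<dots> = (\<Sum>i=0..n. (qint q i * fps_nth f i) * fps_nth g (n-i) + (q^i * fps_nth f i) * (qint q (n-i) * fps_nth g (n-i)))"
    by (rule sum.cong) (auto simp: qint_add[OF assms] algebra_simps)
  also have "\<dots> = fps_nth (qtheta q f * g + fps_qscale q f * qtheta q g) n"
    by (simp add: qtheta_def fps_qscale_def fps_mult_nth sum.distrib)
  finally show "fps_nth (qtheta q (f*g)) n = fps_nth (qtheta q f * g + fps_qscale q f * qtheta q g) n" .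
qed

lemma scale_mult: "fps_qscale q (f*g) = fps_qscale q f * fps_qscale q g"
proof (rule fps_ext)
  fix n
  have "fps_nth (fps_qscale q (f*g)) n = (\<Sum>i=0..n. (q^i * fps_nth f i) * (q^(n-i) * fps_nth g (n-i)))"
    unfolding fps_qscale_def fps_mult_nth
    by (simp add: sum_distrib_left) (rule sum.cong, auto simp: algebra_simps simp flip: power_add)
  then show "fps_nth (fps_qscale q (f*g)) n = fps_nth (fps_qscale q f * fps_qscale q g) n"
    by (simp add: fps_qscale_def fps_mult_nth)
qed

lemma X_qderiv: "fps_X * fps_qderiv q f = qtheta q f"
  by (rule fps_ext) (auto simp: qtheta_def fps_qderiv_def gr0_conv_Suc)

lemma scale_exp: "fps_qscale q (qexp_fps q x) = qexp_fps q (q*x)"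
  by (rule fps_ext) (simp add: fps_qscale_def qexp_fps_def power_mult_distrib)

lemma theta_exp: assumes "0 < q" "q < 1"
  shows "qtheta q (qexp_fps q y) = fps_const y * (fps_X * qexp_fps q y)"
proof (rule fps_ext)
  fix n show "fps_nth (qtheta q (qexp_fps q y)) n = fps_nth (fps_const y * (fps_X * qexp_fps q y)) n"
  proof (cases n)
    case (Suc m)
    have "qint q (Suc m) > 0" "qfact q m > 0" using qint_pos qfact_pos assms by auto
    then show ?thesis using Suc by (simp add: qtheta_def qexp_fps_def qfact_Suc field_simps)
  qed (simp add: qtheta_def)
qed

lemma qfact_0[simp]: "qfact q 0 = 1" by (simp add: qfact_def)
lemma qfact_1[simp]: "q \<noteq> 1 \<Longrightarrow> qfact q 1 = 1" by (simp add: qfact_def qint_def)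

lemma sum_split3: "(\<Sum>k=0..Suc m. f k) = (\<Sum>k<m. f k) + f m + (f (Suc m)::real)"
  by (simp add: atLeast0AtMost flip: lessThan_Suc_atMost)

theorem theorem1:
  fixes q x :: real and a :: "nat \<Rightarrow> real" and n :: nat
  assumes "0 < q" "q < 1"
    and "fps_conv_radius (qAseries q a) > 0"
    and "a 0 \<noteq> 0"
    and "1 \<le> n"
  shows "(qAppell q a n (q * x)
           = 1 / qint q n * (\<Sum>k=0..n. qbinom q n k * qalpha q a (n - k) * q ^ k * qAppell q a k x)
             + x * q ^ n * qAppell q a (n - 1) x)
     \<and> (1 / qint q n * (\<Sum>k=0..n. qbinom q n k * qalpha q a (n - k) * q ^ k * qAppell q a k x)
             + x * q ^ n * qAppell q a (n - 1) x
         = 1 / qint q n * qalpha q a 0 * q ^ n * qAppell q a n x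
           + q ^ n * (x + qalpha q a 1 / q) * qAppell q a (n - 1) x
           + 1 / qint q n * (\<Sum>k<n - 1. qbinom q n k * qalpha q a (n - k) * q ^ k * qAppell q a k x))"
proof -
  have q1: "q \<noteq> 1" using assms by simp
  obtain m where n: "n = Suc m" using assms(5) by (cases n) auto
  define A where "A = qAseries q a"
  define al where "al = fps_X * fps_qderiv q A / fps_qscale q A"
  define R where "R = fps_nth (A * qexp_fps q x) m"
  define T where "T = fps_nth (qtheta q A * qexp_fps q (q*x)) n"
  have hA0: "fps_nth (fps_qscale q A) 0 \<noteq> 0"
    using assms(4) by (simp add: A_def fps_qscale_def qAseries_def)
  have al_eq: "al = fps_X * (fps_qderiv q A * inverse (fps_qscale q A))"
    unfolding al_def using hA0 by (simp add: fps_divide_unit mult.assoc)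
  have halpha: "al * fps_qscale q A = qtheta q A"
    unfolding al_eq using hA0
    by (simp add: mult.assoc inverse_mult_eq_1 X_qderiv)
  have alpha0: "qalpha q a 0 = 0"
    unfolding qalpha_def using al_eq by (simp add: A_def al_def)
  have qf: "\<And>k. qfact q k \<noteq> 0" using qfact_pos assms by (metis less_irrefl)
  have qin: "qint q n > 0" using qint_pos assms by auto
  define Q where "Q = fps_qscale q (A * qexp_fps q x)"
  have QT: "Q * al = qtheta q A * qexp_fps q (q*x)"
    unfolding Q_def scale_mult scale_exp[symmetric] halpha[symmetric] by (simp add: algebra_simps)
  have S: "(\<Sum>k=0..n. qbinom q n k * qalpha q a (n - k) * q ^ k * qAppell q a k x) = qfact q n * T"
  proof -
    have "(\<Sum>k=0..n. qbinom q n k * qalpha q a (n - k) * q ^ k * qAppell q a k x)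
        = (\<Sum>k=0..n. qfact q n * (fps_nth Q k * fps_nth al (n-k)))"
    proof (rule sum.cong)
      fix k assume "k \<in> {0..n}"
      show "qbinom q n k * qalpha q a (n - k) * q ^ k * qAppell q a k x = qfact q n * (fps_nth Q k * fps_nth al (n-k))"
        unfolding qbinom_def qalpha_def qAppell_def Q_def al_def A_def
        using qf[of k] qf[of "n-k"] by (simp add: fps_qscale_def field_simps)
    qed simp
    also have "\<dots> = qfact q n * T" unfolding T_def QT[symmetric]
      by (simp add: fps_mult_nth sum_distrib_left)
    finally show ?thesis .
  qed
  have main: "qint q n * fps_nth (A * qexp_fps q (q*x)) n = T + q * x * q^m * R"
  proof -
    have "qint q n * fps_nth (A * qexp_fps q (q*x)) n = fps_nth (qtheta q (A * qexp_fps q (q*x))) n"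
      by (simp add: qtheta_def)
    also have "\<dots> = T + fps_nth (fps_qscale q A * (fps_const (q*x) * (fps_X * qexp_fps q (q*x)))) n"
      unfolding theta_mult[OF q1] theta_exp[OF assms(1,2)] T_def by simp
    also have "fps_qscale q A * (fps_const (q*x) * (fps_X * qexp_fps q (q*x)))
        = fps_const (q*x) * (fps_X * Q)"
      unfolding Q_def scale_mult scale_exp[symmetric] by (simp add: algebra_simps)
    also have "fps_nth (fps_const (q*x) * (fps_X * Q)) n = q * x * q^m * R"
      by (simp add: n Q_def R_def fps_qscale_def)
    finally show ?thesis .
  qed
  have qfn: "qfact q n = qfact q m * qint q n" by (simp add: n qfact_Suc)
  have ap: "qAppell q a n (q*x) = qfact q n * fps_nth (A * qexp_fps q (q*x)) n"
    by (simp add: qAppell_def A_def)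
  have apm: "qAppell q a (n-1) x = qfact q m * R" by (simp add: qAppell_def A_def R_def n)
  have goal1: "qAppell q a n (q * x)
           = 1 / qint q n * (\<Sum>k=0..n. qbinom q n k * qalpha q a (n - k) * q ^ k * qAppell q a k x)
             + x * q ^ n * qAppell q a (n - 1) x"
  proof -
    have "qAppell q a n (q * x) = qfact q m * (T + q * x * q^m * R)"
      unfolding ap qfn main[symmetric] by simp
    also have "\<dots> = 1 / qint q n * (qfact q n * T) + x * q ^ n * (qfact q m * R)"
      unfolding qfn using qin by (simp add: n field_simps)
    finally show ?thesis unfolding S apm .
  qed
  have goal2: "1 / qint q n * (\<Sum>k=0..n. qbinom q n k * qalpha q a (n - k) * q ^ k * qAppell q a k x)
             + x * q ^ n * qAppell q a (n - 1) x
         = 1 / qint q n * qalpha q a 0 * q ^ n * qAppell q a n x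
           + q ^ n * (x + qalpha q a 1 / q) * qAppell q a (n - 1) x
           + 1 / qint q n * (\<Sum>k<n - 1. qbinom q n k * qalpha q a (n - k) * q ^ k * qAppell q a k x)"
  proof -
    have qb: "qbinom q n m = qint q n" unfolding qbinom_def qfn using qf[of m] q1 qfact_1[OF q1] by (simp add: n)
    show ?thesis unfolding n sum_split3 using qin assms(1) qb alpha0
      by (simp add: n field_simps)
  qed
  show ?thesis using goal1 goal2 by blast
qed

end
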